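(* In each of the following cases there exists an ascending partition $\mathcal P=[p_1,\dots,p_k]\in AP_{n,k}$ with $p_1=\cdots=p_e=2$ and $p_{e+1}=\cdots=p_{e+f}=3$ (i.e. completing the partial partition $[2^e,3^f]$) such that $\mathcal P$ is non-equitable and $\mathrm{slack}(\mathcal P)\ge 0$: (a) $n=6t+3$, $k=2t+1$, $e=\frac32 t$, $f=2$, for every even $t\ge 6$; (b) $n=6t+3$, $k=2t+1$, $e=\frac32 t-\frac12$, $f=3$, for every odd $t\ge 7$; (c) $n=6t+2$, $k=2t+1$, $e=\frac32 t$, $f=3$, for every even $t\ge 10$; (d) $n=6t+2$, $k=2t+1$, $e=\frac32 t+\frac12$, $f=2$, for every odd $t\ge 11$.
   Context: $[n]=\{1,\ldots,n\}$ and $s^{n,k}=\frac{n(n+1)}{2k}$. An ascending partition of $n$ of size $k$ is a sequence of positive integers $[p_1,\ldots,p_k]$ with $p_1\le\cdots\le p_k$ and $\sum_i p_i=n$; $AP_{n,k}$ is the set of all such partitions when $s^{n,k}$ is an integer (and empty otherwise). $\mathcal P$ is equitable if $[n]$ can be partitioned into sets $A_1,\dots,A_k$ with $|A_i|=p_i$ all having the same element sum. For $j=1,\ldots,k$, $\mathrm{slack}_j(\mathcal P)=\sum_{i=1}^{p_1+\cdots+p_j}(n-i+1)-j\,s^{n,k}$, and $\mathrm{slack}(\mathcal P)=\min_{1\le j\le k-1}\mathrm{slack}_j(\mathcal P)$. *)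

theory Defs
  imports Complex_Main
begin

definition s_nk :: "nat \<Rightarrow> nat \<Rightarrow> rat" where
  "s_nk n k = of_nat (n * (n + 1)) / of_nat (2 * k)"

definition ascending_partition :: "nat \<Rightarrow> nat \<Rightarrow> nat list \<Rightarrow> bool" where
  "ascending_partition n k P \<longleftrightarrow>
     length P = k \<and> sorted P \<and> (\<forall>p\<in>set P. 0 < p) \<and> sum_list P = n"

definition AP :: "nat \<Rightarrow> nat \<Rightarrow> nat list set" where
  "AP n k = (if s_nk n k \<in> \<int> then {P. ascending_partition n k P} else {})"

text \<open>Equitable: [n] splits into sets A_1..A_k (indexed 0..k-1) with |A_i| = p_i and equal sums.\<close>
definition equitable :: "nat \<Rightarrow> nat list \<Rightarrow> bool" where
  "equitable n P \<longleftrightarrow>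
     (\<exists>A :: nat \<Rightarrow> nat set.
        (\<Union>i<length P. A i) = {1..n} \<and>
        (\<forall>i<length P. \<forall>j<length P. i \<noteq> j \<longrightarrow> A i \<inter> A j = {}) \<and>
        (\<forall>i<length P. card (A i) = P ! i) \<and>
        (\<forall>i<length P. \<forall>j<length P. \<Sum>(A i) = \<Sum>(A j)))"

definition slack_j :: "nat \<Rightarrow> nat list \<Rightarrow> nat \<Rightarrow> rat" where
  "slack_j n P j =
     (\<Sum>i = 1..sum_list (take j P). (of_nat n - of_nat i + 1 :: rat))
       - of_nat j * s_nk n (length P)"

definition slack :: "nat \<Rightarrow> nat list \<Rightarrow> rat" where
  "slack n P = Min ((\<lambda>j. slack_j n P j) ` {1..length P - 1})"

end

theory Submission
  imports Defs
begin
lemma sum_lin: "(\<Sum>i = 1..L. (of_nat n - of_nat i + 1 :: rat)) = of_int (int L * (2 * int n - int L + 1)) / 2"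
  by (induction L) (auto simp: field_simps)

lemma conc:
  fixes A B C a i :: int
  assumes "0 \<le> C" "0 \<le> i" "i \<le> a" "0 \<le> A" "0 \<le> A + B*a - C*a^2"
  shows "0 \<le> A + B*i - C*i^2"
proof -
  have id: "a*(A+B*i-C*i^2) = (a-i)*A + i*(A+B*a-C*a^2) + C*a*i*(a-i)"
    by (simp add: algebra_simps power2_eq_square)
  have "0 \<le> (a-i)*A + i*(A+B*a-C*a^2) + C*a*i*(a-i)"
    using assms by (intro add_nonneg_nonneg mult_nonneg_nonneg) auto
  hence h: "0 \<le> a*(A+B*i-C*i^2)" using id by simp
  show ?thesis
  proof (cases "a = 0")
    case True then show ?thesis using assms by simp
  next
    case False then have "a > 0" using assms by simp
    then show ?thesis using h by (simp add: zero_le_mult_iff)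
  qed
qed

lemma conc2:
  fixes L0 c j0 n S i a :: int
  assumes "0 \<le> i" "i \<le> a"
    "0 \<le> L0*(2*n-L0+1) - 2*j0*S"
    "0 \<le> (L0+c*a)*(2*n-L0-c*a+1) - 2*(j0+a)*S"
  shows "0 \<le> (L0+c*i)*(2*n-L0-c*i+1) - 2*(j0+i)*S"
proof -
  have e: "\<And>x. (L0+c*x)*(2*n-L0-c*x+1) - 2*(j0+x)*S
     = (L0*(2*n-L0+1) - 2*j0*S) + (c*(2*n-2*L0+1) - 2*S)*x - c^2*x^2"
    by (simp add: algebra_simps power2_eq_square)
  have ha: "0 \<le> (L0*(2*n-L0+1) - 2*j0*S) + (c*(2*n-2*L0+1) - 2*S)*a - c^2*a^2"
    using assms(4) unfolding e .
  have h0: "0 \<le> L0*(2*n-L0+1) - 2*j0*S" using assms(3) by linarith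
  show ?thesis unfolding e
    using conc[OF _ assms(1,2) h0 ha] by simp
qed


lemma three_le:
  fixes x y z m :: nat
  assumes "x \<noteq> y" "x \<noteq> z" "y \<noteq> z" "x < m" "y < m" "z < m"
  shows "x + y + z + 6 \<le> 3*m"
proof -
  have "x < y \<or> y < x" "x < z \<or> z < x" "y < z \<or> z < y" using assms(1-3) by auto
  then show ?thesis using assms(4-6) by (elim disjE) linarith+
qed

lemma count21: "(\<Sum>i<e+f. (if i < e then 2 else 1::nat)) = 2*e+f"
proof (induction f)
  case 0
  have "(\<Sum>i<e. (if i < e then 2 else 1::nat)) = (\<Sum>i<e. 2)" by (rule sum.cong) auto
  then show ?case by simp
next
  case (Suc f) then show ?case by simp
qed

lemma gauss2: "2 * \<Sum>{1..n::nat} = n*(n+1)"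
  by (induction n) auto

lemma noneq:
  assumes len: "length P = k" and P2: "\<forall>i<e. P!i = 2" and P3: "\<forall>i. e\<le>i \<and> i<e+f \<longrightarrow> P!i=3"
    and ef: "e+f \<le> k" and nS: "n*(n+1) = 2*k*S" and mS: "m+n \<le> S" and m3: "3*m < S+6"
    and cnt: "n+1 < m+2*e+f" and kpos: "k>0" and mn: "m \<le> n"
  shows "\<not> equitable n P"
proof
  assume "equitable n P"
  then obtain A :: "nat \<Rightarrow> nat set" where
    U: "(\<Union>i<k. A i) = {1..n}" and
    D: "\<forall>i<k. \<forall>j<k. i \<noteq> j \<longrightarrow> A i \<inter> A j = {}" and
    C: "\<forall>i<k. card (A i) = P ! i" and
    E: "\<forall>i<k. \<forall>j<k. \<Sum>(A i) = \<Sum>(A j)"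
    unfolding equitable_def len by blast
  have sub: "A i \<subseteq> {1..n}" if "i<k" for i using U that by blast
  have fin: "finite (A i)" if "i<k" for i using sub[OF that] finite_subset by blast
  have Ei: "\<Sum>(A i) = \<Sum>(A 0)" if "i<k" for i using E[rule_format, OF that kpos] .
  have "\<Sum>{1..n} = (\<Sum>i<k. \<Sum>(A i))"
    unfolding U[symmetric]
  proof (rule sum.UNION_disjoint)
    show "\<forall>i\<in>{..<k}. finite (A i)" using fin by blast
    show "\<forall>i\<in>{..<k}. \<forall>j\<in>{..<k}. i \<noteq> j \<longrightarrow> A i \<inter> A j = {}" using D by blast
  qed simp
  also have "\<dots> = (\<Sum>i<k. \<Sum>(A 0))" by (rule sum.cong[OF refl Ei]) simp
  finally have "\<Sum>{1..n} = k * \<Sum>(A 0)" by simp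
  then have "n*(n+1) = 2*(k*\<Sum>(A 0))" using gauss2[of n] by simp
  then have "k*\<Sum>(A 0) = k*S" using nS by simp
  with kpos have A0: "\<Sum>(A 0) = S" by simp
  have AS: "\<Sum>(A i) = S" if "i<k" for i using Ei[OF that] A0 by simp
  define B where "B = (\<Union>i<e+f. A i \<inter> {m..n})"
  have "card B = (\<Sum>i<e+f. card (A i \<inter> {m..n}))"
    unfolding B_def
  proof (rule card_UN_disjoint)
    show "\<forall>i\<in>{..<e+f}. \<forall>j\<in>{..<e+f}. i \<noteq> j \<longrightarrow> A i \<inter> {m..n} \<inter> (A j \<inter> {m..n}) = {}"
    proof (intro ballI impI)
      fix i j assume "i \<in> {..<e+f}" "j \<in> {..<e+f}" "i \<noteq> j"
      then have "A i \<inter> A j = {}" using D ef by simp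
      then show "A i \<inter> {m..n} \<inter> (A j \<inter> {m..n}) = {}" by blast
    qed
  qed simp_all
  also have "\<dots> \<ge> (\<Sum>i<e+f. (if i < e then 2 else 1::nat))"
  proof (rule sum_mono)
    fix i assume i: "i \<in> {..<e+f}"
    hence ik: "i < k" using ef by auto
    show "(if i < e then 2 else 1) \<le> card (A i \<inter> {m..n})"
    proof (cases "i < e")
      case True
      then have "card (A i) = 2" using C P2 ik by auto
      then obtain x y where xy: "A i = {x,y}" "x \<noteq> y" unfolding card_2_iff by blast
      have "x + y = S" using AS[OF ik] xy by simp
      moreover have "x \<le> n" "y \<le> n" using sub[OF ik] xy by auto
      ultimately have "A i \<inter> {m..n} = A i" using xy mS by auto
      then show ?thesis using True \<open>card (A i) = 2\<close> by simp
    next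
      case False
      then have "card (A i) = 3" using C P3 ik i by auto
      then obtain x y z where xyz: "A i = {x,y,z}" "x \<noteq> y" "y \<noteq> z" "x \<noteq> z"
        unfolding card_3_iff by blast
      have s: "x + y + z = S" using AS[OF ik] xyz by simp
      have le: "x \<le> n" "y \<le> n" "z \<le> n" using sub[OF ik] xyz by auto
      have "A i \<inter> {m..n} \<noteq> {}"
      proof
        assume "A i \<inter> {m..n} = {}"
        then have "x < m" "y < m" "z < m" using xyz le by auto
        then have "x + y + z + 6 \<le> 3*m" using three_le xyz by blast
        then show False using s m3 by linarith
      qed
      moreover have "finite (A i \<inter> {m..n})" by simp
      ultimately have "card (A i \<inter> {m..n}) \<ge> 1"
        by (simp add: Suc_leI card_gt_0_iff)
      then show ?thesis using False by simp
    qed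
  qed
  finally have c1: "card B \<ge> 2*e+f" using count21 by simp
  have "B \<subseteq> {m..n}" unfolding B_def by auto
  then have "card B \<le> n+1-m" using card_mono[of "{m..n}" B] by simp
  then show False using c1 cnt mn by linarith
qed

lemma t1: "j \<le> e \<Longrightarrow> sum_list (take j (replicate e (2::nat) @ replicate f 3 @ replicate a 6 @ [l])) = 2*j"
  by (simp add: sum_list_replicate)
lemma t2: "e \<le> j \<Longrightarrow> j \<le> e+f \<Longrightarrow> sum_list (take j (replicate e (2::nat) @ replicate f 3 @ replicate a 6 @ [l])) = 2*e+3*(j-e)"
  by (auto simp: sum_list_replicate min_def)
lemma t3: "e+f \<le> j \<Longrightarrow> j \<le> e+f+a \<Longrightarrow> sum_list (take j (replicate e (2::nat) @ replicate f 3 @ replicate a 6 @ [l])) = 2*e+3*f+6*(j-e-f)"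
  by (auto simp: sum_list_replicate min_def)
lemma srt: "6 \<le> l \<Longrightarrow> sorted (replicate e (2::nat) @ replicate f 3 @ replicate a 6 @ [l])"
  by (auto simp: sorted_append)

lemma generic:
  fixes n k e f a l S m :: nat
  assumes P: "P = replicate e 2 @ replicate f 3 @ replicate a 6 @ [l]"
  and l6: "6 \<le> l" and kk: "k = e+f+a+1" and nn: "n = 2*e+3*f+6*a+l"
  and nS: "n*(n+1) = 2*k*S" and mS: "m+n \<le> S" and m3: "3*m < S+6" and cnt: "n+1 < m+2*e+f"
  and mn: "m \<le> n"
  and H1: "S + 2*e \<le> 2*n+1"
  and H2: "0 \<le> int(2*e+3*f)*(2*int n - int(2*e+3*f) + 1) - 2*int(e+f)*int S"
  and H3: "l*(l+1) \<le> 2*S"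
  shows "P \<in> AP n k \<and> take e P = replicate e 2 \<and> take f (drop e P) = replicate f 3
     \<and> \<not> equitable n P \<and> slack n P \<ge> 0"
proof -
  have kpos: "k > 0" using kk by simp
  have len: "length P = k" using P kk by simp
  have sk: "s_nk n k = of_nat S"
  proof -
    have "s_nk n k = of_nat (2*k*S) / of_nat (2*k)" unfolding s_nk_def nS ..
    also have "\<dots> = of_nat S" using kpos by (simp add: field_simps)
    finally show ?thesis .
  qed
  have ap: "P \<in> AP n k"
    unfolding AP_def sk ascending_partition_def
    using srt[OF l6, of e f a] len nn P l6 by (auto simp: sum_list_replicate)
  have tk: "take e P = replicate e 2" "take f (drop e P) = replicate f 3" using P by simp_all
  have ne: "\<not> equitable n P"
  proof (rule noneq[OF len _ _ _ nS mS m3 cnt kpos mn])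
    show "\<forall>i<e. P ! i = 2" using P by (simp add: nth_append)
    show "\<forall>i. e \<le> i \<and> i < e + f \<longrightarrow> P ! i = 3" using P by (auto simp: nth_append)
    show "e + f \<le> k" using kk by simp
  qed
  define G where "G = (\<lambda>L j::nat. int L*(2*int n - int L + 1) - 2*int j*int S)"
  have sj: "slack_j n P j = of_int (G (sum_list (take j P)) j) / 2" for j
    unfolding slack_j_def sum_lin len sk G_def by (simp add: field_simps)
  have Gnn: "0 \<le> G (sum_list (take j P)) j" if j: "j \<le> k - 1" for j
  proof -
    have R1: "0 \<le> G (2*j') j'" if "j' \<le> e" for j'
    proof -
      have "G (2*j') j' = 2*int j' * (2*int n - 2*int j' + 1 - int S)" unfolding G_def
        by (simp add: algebra_simps)
      moreover have "0 \<le> 2*int n - 2*int j' + 1 - int S" using H1 that by linarith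
      ultimately show ?thesis by simp
    qed
    consider "j \<le> e" | "e \<le> j" "j \<le> e+f" | "e+f \<le> j" "j \<le> e+f+a" using j kk by linarith
    then show ?thesis
    proof cases
      case 1 then show ?thesis using R1 t1 P by simp
    next
      case 2
      have "0 \<le> (int(2*e)+3*int (j-e))*(2*int n-int(2*e)-3*int (j-e)+1) - 2*(int e+int (j-e))*int S"
      proof (rule conc2)
        show "0 \<le> int (j-e)" by simp
        show "int (j-e) \<le> int f" using 2 by simp
        show "0 \<le> int (2 * e) * (2 * int n - int (2 * e) + 1) - 2 * int e * int S"
          using R1[of e] unfolding G_def by simp
        show "0 \<le> (int (2 * e) + 3 * int f) * (2 * int n - int (2 * e) - 3 * int f + 1) - 2 * (int e + int f) * int S"
          using H2 by (simp add: algebra_simps)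
      qed
      moreover have "sum_list (take j P) = 2*e+3*(j-e)" using t2 2 P by simp
      ultimately show ?thesis unfolding G_def using 2 by (simp add: algebra_simps of_nat_diff)
    next
      case 3
      have Ha: "0 \<le> (int(2*e+3*f)+6*int a)*(2*int n-int(2*e+3*f)-6*int a+1) - 2*(int (e+f)+int a)*int S"
      proof -
        have "int (n*(n+1)) = int (2*k*S)" using nS by simp
        then have nS': "int n * int n + int n = 2 * int k * int S" by (simp add: algebra_simps)
        have e1: "int(2*e+3*f)+6*int a = int n - int l" using nn by simp
        have e2: "int (e+f)+int a = int k - 1" using kk by simp
        have "(int(2*e+3*f)+6*int a)*(2*int n-int(2*e+3*f)-6*int a+1) - 2*(int (e+f)+int a)*int S
           = (int n - int l)*(int n + int l + 1) - 2*(int k - 1)*int S"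
          unfolding e2 nn by (simp add: algebra_simps)
        also have "\<dots> = 2*int S - int l * (int l + 1)" using nS' by (simp add: algebra_simps; linarith)
        moreover have "int (l*(l+1)) \<le> int (2*S)" using H3 by (simp only: of_nat_le_iff)
        then have "int l * (int l + 1) \<le> 2*int S" by (simp only: of_nat_mult of_nat_add of_nat_1 of_nat_numeral)
        ultimately show ?thesis by linarith
      qed
      have "0 \<le> (int(2*e+3*f)+6*int (j-e-f))*(2*int n-int(2*e+3*f)-6*int (j-e-f)+1) - 2*(int (e+f)+int (j-e-f))*int S"
      proof (rule conc2)
        show "0 \<le> int (j-e-f)" by simp
        show "int (j-e-f) \<le> int a" using 3 by simp
        show "0 \<le> int (2*e+3*f) * (2 * int n - int (2*e+3*f) + 1) - 2 * int (e+f) * int S"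
          using H2 by simp
        show "0 \<le> (int(2*e+3*f)+6*int a)*(2*int n-int(2*e+3*f)-6*int a+1) - 2*(int (e+f)+int a)*int S"
          using Ha .
      qed
      moreover have "sum_list (take j P) = 2*e+3*f+6*(j-e-f)" using t3 3 P by simp
      ultimately show ?thesis unfolding G_def using 3 by (simp add: algebra_simps of_nat_diff)
    qed
  qed
  have sl: "slack n P \<ge> 0"
  proof -
    have "k - 1 \<ge> 1" using kk cnt mn by linarith
    then have "0 \<le> Min ((\<lambda>j. slack_j n P j) ` {1..k - 1})"
      using Gnn by (auto simp: sj)
    then show ?thesis unfolding slack_def len .
  qed
  show ?thesis using ap tk ne sl by simp
qed


lemma caseA:
  fixes t :: nat
  assumes h: "even t \<and> t \<ge> 6"
  shows "\<exists>P \<in> AP (6*t+3) (2*t+1).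
          take (3*t div 2) P = replicate (3*t div 2) 2 \<and>
          take 2 (drop (3*t div 2) P) = replicate 2 3 \<and>
          \<not> equitable (6*t+3) P \<and> slack (6*t+3) P \<ge> 0"
proof -
  obtain v where tv: "t = 2*v+6"
  proof -
    obtain u where "t = 2*u " using h by (auto elim: evenE oddE)
    then show ?thesis using h that[of "u - 3"] by simp
  qed
  have ev: "3*t div 2 = 3*v+9" using tv by simp
  have g: "replicate (3*v+9) (2::nat) @ replicate 2 3 @ replicate (v+1) 6 @ [9] \<in> AP (6*t+3) (2*t+1) \<and>
      take (3*v+9) (replicate (3*v+9) (2::nat) @ replicate 2 3 @ replicate (v+1) 6 @ [9]) = replicate (3*v+9) 2 \<and>
      take 2 (drop (3*v+9) (replicate (3*v+9) (2::nat) @ replicate 2 3 @ replicate (v+1) 6 @ [9])) = replicate 2 3 \<and>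
      \<not> equitable (6*t+3) (replicate (3*v+9) (2::nat) @ replicate 2 3 @ replicate (v+1) 6 @ [9]) \<and>
      slack (6*t+3) (replicate (3*v+9) (2::nat) @ replicate 2 3 @ replicate (v+1) 6 @ [9]) \<ge> 0"
  proof (rule generic[where S="9*t+6" and m="3*t+3"])
    show "2*t+1 = 3*v+9 + 2 + (v+1) + 1" using tv by simp
    show "6*t+3 = 2*(3*v+9) + 3*2 + 6*(v+1) + 9" using tv by simp
    show "(6*t+3)*(6*t+3+1) = 2*(2*t+1)*(9*t+6)" using tv by (simp add: algebra_simps)
    show "3*t+3 + (6*t+3) \<le> 9*t+6" using tv by simp
    show "3*(3*t+3) < 9*t+6 + 6" using tv by simp
    show "6*t+3+1 < 3*t+3 + 2*(3*v+9) + 2" using tv by simp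
    show "3*t+3 \<le> 6*t+3" using tv by simp
    show "9*t+6 + 2*(3*v+9) \<le> 2*(6*t+3)+1" using tv by simp
    show "0 \<le> int(2*(3*v+9)+3*2)*(2*int (6*t+3) - int(2*(3*v+9)+3*2) + 1) - 2*int(3*v+9+2)*int (9*t+6)"
      using tv by (simp add: algebra_simps)
    show "9*(9+1) \<le> 2*(9*t+6)" using tv by simp
  qed simp_all
  then show ?thesis unfolding ev by blast
qed

lemma caseB:
  fixes t :: nat
  assumes h: "odd t \<and> t \<ge> 7"
  shows "\<exists>P \<in> AP (6*t+3) (2*t+1).
          take ((3*t - 1) div 2) P = replicate ((3*t - 1) div 2) 2 \<and>
          take 3 (drop ((3*t - 1) div 2) P) = replicate 3 3 \<and>
          \<not> equitable (6*t+3) P \<and> slack (6*t+3) P \<ge> 0"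
proof -
  obtain v where tv: "t = 2*v+7"
  proof -
    obtain u where "t = 2*u + 1" using h by (auto elim: evenE oddE)
    then show ?thesis using h that[of "u - 3"] by simp
  qed
  have ev: "(3*t - 1) div 2 = 3*v+10" using tv by simp
  have g: "replicate (3*v+10) (2::nat) @ replicate 3 3 @ replicate (v+1) 6 @ [10] \<in> AP (6*t+3) (2*t+1) \<and>
      take (3*v+10) (replicate (3*v+10) (2::nat) @ replicate 3 3 @ replicate (v+1) 6 @ [10]) = replicate (3*v+10) 2 \<and>
      take 3 (drop (3*v+10) (replicate (3*v+10) (2::nat) @ replicate 3 3 @ replicate (v+1) 6 @ [10])) = replicate 3 3 \<and>
      \<not> equitable (6*t+3) (replicate (3*v+10) (2::nat) @ replicate 3 3 @ replicate (v+1) 6 @ [10]) \<and>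
      slack (6*t+3) (replicate (3*v+10) (2::nat) @ replicate 3 3 @ replicate (v+1) 6 @ [10]) \<ge> 0"
  proof (rule generic[where S="9*t+6" and m="3*t+3"])
    show "2*t+1 = 3*v+10 + 3 + (v+1) + 1" using tv by simp
    show "6*t+3 = 2*(3*v+10) + 3*3 + 6*(v+1) + 10" using tv by simp
    show "(6*t+3)*(6*t+3+1) = 2*(2*t+1)*(9*t+6)" using tv by (simp add: algebra_simps)
    show "3*t+3 + (6*t+3) \<le> 9*t+6" using tv by simp
    show "3*(3*t+3) < 9*t+6 + 6" using tv by simp
    show "6*t+3+1 < 3*t+3 + 2*(3*v+10) + 3" using tv by simp
    show "3*t+3 \<le> 6*t+3" using tv by simp
    show "9*t+6 + 2*(3*v+10) \<le> 2*(6*t+3)+1" using tv by simp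
    show "0 \<le> int(2*(3*v+10)+3*3)*(2*int (6*t+3) - int(2*(3*v+10)+3*3) + 1) - 2*int(3*v+10+3)*int (9*t+6)"
      using tv by (simp add: algebra_simps)
    show "10*(10+1) \<le> 2*(9*t+6)" using tv by simp
  qed simp_all
  then show ?thesis unfolding ev by blast
qed

lemma caseC:
  fixes t :: nat
  assumes h: "even t \<and> t \<ge> 10"
  shows "\<exists>P \<in> AP (6*t+2) (2*t+1).
          take (3*t div 2) P = replicate (3*t div 2) 2 \<and>
          take 3 (drop (3*t div 2) P) = replicate 3 3 \<and>
          \<not> equitable (6*t+2) P \<and> slack (6*t+2) P \<ge> 0"
proof -
  obtain v where tv: "t = 2*v+10"
  proof -
    obtain u where "t = 2*u " using h by (auto elim: evenE oddE)
    then show ?thesis using h that[of "u - 5"] by simp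
  qed
  have ev: "3*t div 2 = 3*v+15" using tv by simp
  have g: "replicate (3*v+15) (2::nat) @ replicate 3 3 @ replicate (v+2) 6 @ [11] \<in> AP (6*t+2) (2*t+1) \<and>
      take (3*v+15) (replicate (3*v+15) (2::nat) @ replicate 3 3 @ replicate (v+2) 6 @ [11]) = replicate (3*v+15) 2 \<and>
      take 3 (drop (3*v+15) (replicate (3*v+15) (2::nat) @ replicate 3 3 @ replicate (v+2) 6 @ [11])) = replicate 3 3 \<and>
      \<not> equitable (6*t+2) (replicate (3*v+15) (2::nat) @ replicate 3 3 @ replicate (v+2) 6 @ [11]) \<and>
      slack (6*t+2) (replicate (3*v+15) (2::nat) @ replicate 3 3 @ replicate (v+2) 6 @ [11]) \<ge> 0"
  proof (rule generic[where S="9*t+3" and m="3*t+1"])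
    show "2*t+1 = 3*v+15 + 3 + (v+2) + 1" using tv by simp
    show "6*t+2 = 2*(3*v+15) + 3*3 + 6*(v+2) + 11" using tv by simp
    show "(6*t+2)*(6*t+2+1) = 2*(2*t+1)*(9*t+3)" using tv by (simp add: algebra_simps)
    show "3*t+1 + (6*t+2) \<le> 9*t+3" using tv by simp
    show "3*(3*t+1) < 9*t+3 + 6" using tv by simp
    show "6*t+2+1 < 3*t+1 + 2*(3*v+15) + 3" using tv by simp
    show "3*t+1 \<le> 6*t+2" using tv by simp
    show "9*t+3 + 2*(3*v+15) \<le> 2*(6*t+2)+1" using tv by simp
    show "0 \<le> int(2*(3*v+15)+3*3)*(2*int (6*t+2) - int(2*(3*v+15)+3*3) + 1) - 2*int(3*v+15+3)*int (9*t+3)"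
      using tv by (simp add: algebra_simps)
    show "11*(11+1) \<le> 2*(9*t+3)" using tv by simp
  qed simp_all
  then show ?thesis unfolding ev by blast
qed

lemma caseD:
  fixes t :: nat
  assumes h: "odd t \<and> t \<ge> 11"
  shows "\<exists>P \<in> AP (6*t+2) (2*t+1).
          take ((3*t + 1) div 2) P = replicate ((3*t + 1) div 2) 2 \<and>
          take 2 (drop ((3*t + 1) div 2) P) = replicate 2 3 \<and>
          \<not> equitable (6*t+2) P \<and> slack (6*t+2) P \<ge> 0"
proof -
  obtain v where tv: "t = 2*v+11"
  proof -
    obtain u where "t = 2*u + 1" using h by (auto elim: evenE oddE)
    then show ?thesis using h that[of "u - 5"] by simp
  qed
  have ev: "(3*t + 1) div 2 = 3*v+17" using tv by simp
  have g: "replicate (3*v+17) (2::nat) @ replicate 2 3 @ replicate (v+3) 6 @ [10] \<in> AP (6*t+2) (2*t+1) \<and>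
      take (3*v+17) (replicate (3*v+17) (2::nat) @ replicate 2 3 @ replicate (v+3) 6 @ [10]) = replicate (3*v+17) 2 \<and>
      take 2 (drop (3*v+17) (replicate (3*v+17) (2::nat) @ replicate 2 3 @ replicate (v+3) 6 @ [10])) = replicate 2 3 \<and>
      \<not> equitable (6*t+2) (replicate (3*v+17) (2::nat) @ replicate 2 3 @ replicate (v+3) 6 @ [10]) \<and>
      slack (6*t+2) (replicate (3*v+17) (2::nat) @ replicate 2 3 @ replicate (v+3) 6 @ [10]) \<ge> 0"
  proof (rule generic[where S="9*t+3" and m="3*t+1"])
    show "2*t+1 = 3*v+17 + 2 + (v+3) + 1" using tv by simp
    show "6*t+2 = 2*(3*v+17) + 3*2 + 6*(v+3) + 10" using tv by simp
    show "(6*t+2)*(6*t+2+1) = 2*(2*t+1)*(9*t+3)" using tv by (simp add: algebra_simps)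
    show "3*t+1 + (6*t+2) \<le> 9*t+3" using tv by simp
    show "3*(3*t+1) < 9*t+3 + 6" using tv by simp
    show "6*t+2+1 < 3*t+1 + 2*(3*v+17) + 2" using tv by simp
    show "3*t+1 \<le> 6*t+2" using tv by simp
    show "9*t+3 + 2*(3*v+17) \<le> 2*(6*t+2)+1" using tv by simp
    show "0 \<le> int(2*(3*v+17)+3*2)*(2*int (6*t+2) - int(2*(3*v+17)+3*2) + 1) - 2*int(3*v+17+2)*int (9*t+3)"
      using tv by (simp add: algebra_simps)
    show "10*(10+1) \<le> 2*(9*t+3)" using tv by simp
  qed simp_all
  then show ?thesis unfolding ev by blast
qed

theorem mainTheorem3:
  shows
   "(\<forall>t::nat. even t \<and> t \<ge> 6 \<longrightarrow>
       (\<exists>P \<in> AP (6*t+3) (2*t+1).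
          take (3*t div 2) P = replicate (3*t div 2) 2 \<and>
          take 2 (drop (3*t div 2) P) = replicate 2 3 \<and>
          \<not> equitable (6*t+3) P \<and> slack (6*t+3) P \<ge> 0))
  \<and> (\<forall>t::nat. odd t \<and> t \<ge> 7 \<longrightarrow>
       (\<exists>P \<in> AP (6*t+3) (2*t+1).
          take ((3*t - 1) div 2) P = replicate ((3*t - 1) div 2) 2 \<and>
          take 3 (drop ((3*t - 1) div 2) P) = replicate 3 3 \<and>
          \<not> equitable (6*t+3) P \<and> slack (6*t+3) P \<ge> 0))
  \<and> (\<forall>t::nat. even t \<and> t \<ge> 10 \<longrightarrow>
       (\<exists>P \<in> AP (6*t+2) (2*t+1).
          take (3*t div 2) P = replicate (3*t div 2) 2 \<and>
          take 3 (drop (3*t div 2) P) = replicate 3 3 \<and>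
          \<not> equitable (6*t+2) P \<and> slack (6*t+2) P \<ge> 0))
  \<and> (\<forall>t::nat. odd t \<and> t \<ge> 11 \<longrightarrow>
       (\<exists>P \<in> AP (6*t+2) (2*t+1).
          take ((3*t + 1) div 2) P = replicate ((3*t + 1) div 2) 2 \<and>
          take 2 (drop ((3*t + 1) div 2) P) = replicate 2 3 \<and>
          \<not> equitable (6*t+2) P \<and> slack (6*t+2) P \<ge> 0))"
  using caseA caseB caseC caseD by blast

end
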